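(* Let $n\ge1$ be an integer and let $N$ be a generalized Waring process on $\mathbb R^d$ with parameters $a>0$, $\rho>n$, $k\in\mathbb N$ and parameter measure the Lebesgue measure on $\mathbb R^d$. Then $N$ is $n$th-order stationary: its $n$th-order moment measure $M_n(A_1\times\cdots\times A_n)=E[N(A_1)\cdots N(A_n)]$ is finite on products of bounded Borel sets and satisfies $M_n((A_1+u)\times\cdots\times(A_n+u))=M_n(A_1\times\cdots\times A_n)$ for all bounded Borel $A_1,\dots,A_n\subset\mathbb R^d$ and all $u\in\mathbb R^d$.
   Context: For $x>0$, $\beta\ge0$ write $x_{(\beta)}=\Gamma(x+\beta)/\Gamma(x)$, with $0_{(0)}=1$ and $0_{(n)}=0$ for integers $n\ge1$. For $a,\rho>0$ and $k_1,\dots,k_s\ge 0$, $\mathrm{MGWD}(a;k_1,\dots,k_s;\rho)$ denotes the law on $\{0,1,2,\dots\}^s$ with $P(X_i=x_i,\ i=1,\dots,s)=\frac{\rho_{(\sum_i k_i)}\,a_{(\sum_i x_i)}}{(\rho+a)_{(\sum_i k_i+\sum_i x_i)}}\prod_{i=1}^s\frac{(k_i)_{(x_i)}}{x_i!}$. A point process $N$ on a complete separable metric space $\mathcal S$ is a generalized Waring process with parameters $a,\rho,k>0$ and parameter measure $\mu$ (a boundedly finite Borel measure) if for every finite family of pairwise disjoint bounded Borel sets $A_1,\dots,A_l$, $(N(A_1),\dots,N(A_l))$ has the $\mathrm{MGWD}(a;k\mu(A_1),\dots,k\mu(A_l);\rho)$ distribution. *)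

theory Defs
  imports "HOL-Probability.Probability"
begin

definition gpoch :: "real \<Rightarrow> real \<Rightarrow> real" where
  "gpoch x \<beta> = (if x = 0 then (if \<beta> = 0 then 1 else 0) else Gamma (x + \<beta>) / Gamma x)"

definition mgwd_prob :: "real \<Rightarrow> (nat \<Rightarrow> real) \<Rightarrow> real \<Rightarrow> nat \<Rightarrow> (nat \<Rightarrow> nat) \<Rightarrow> real" where
  "mgwd_prob a ks \<rho> s xs =
     gpoch \<rho> (\<Sum>i<s. ks i) * gpoch a (\<Sum>i<s. real (xs i))
       / gpoch (\<rho> + a) ((\<Sum>i<s. ks i) + (\<Sum>i<s. real (xs i)))
     * (\<Prod>i<s. gpoch (ks i) (real (xs i)) / fact (xs i))"

definition point_process :: "'w measure \<Rightarrow> ('w \<Rightarrow> 'a::metric_space set \<Rightarrow> nat) \<Rightarrow> bool" where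
  "point_process M N \<longleftrightarrow>
     (\<forall>w\<in>space M. \<exists>\<nu>. sets \<nu> = sets borel \<and>
        (\<forall>A\<in>sets borel. bounded A \<longrightarrow> emeasure \<nu> A = of_nat (N w A))) \<and>
     (\<forall>A\<in>sets borel. bounded A \<longrightarrow> (\<lambda>w. N w A) \<in> measurable M (count_space UNIV))"

definition gen_waring_process ::
  "'w measure \<Rightarrow> ('w \<Rightarrow> 'a::metric_space set \<Rightarrow> nat) \<Rightarrow> real \<Rightarrow> real \<Rightarrow> real \<Rightarrow> 'a measure \<Rightarrow> bool" where
  "gen_waring_process M N a \<rho> k \<mu> \<longleftrightarrow>
     prob_space M \<and> point_process M N \<and> a > 0 \<and> \<rho> > 0 \<and> k > 0 \<and>
     sets \<mu> = sets borel \<and>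
     (\<forall>A\<in>sets borel. bounded A \<longrightarrow> emeasure \<mu> A < \<infinity>) \<and>
     (\<forall>(l::nat) (A::nat \<Rightarrow> 'a set) (xs::nat \<Rightarrow> nat).
        (\<forall>i<l. A i \<in> sets borel \<and> bounded (A i)) \<longrightarrow> disjoint_family_on A {..<l} \<longrightarrow>
        measure M {w\<in>space M. \<forall>i<l. N w (A i) = xs i}
          = mgwd_prob a (\<lambda>i. k * measure \<mu> (A i)) \<rho> l xs)"

end

theory Submission
  imports Defs
begin


lemma ratio_comparison:
  fixes u v R S :: "nat \<Rightarrow> real"
  assumes u0: "\<And>x. u x \<ge> 0" and v0: "\<And>x. v x > 0" and sv: "summable v"
    and uR: "\<And>x. u (Suc x) = u x * R x" and vS: "\<And>x. v (Suc x) = v x * S x"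
    and RS: "\<And>x. x \<ge> N \<Longrightarrow> 0 \<le> R x \<and> R x \<le> S x"
  shows "summable u"
proof -
  define c where "c = u N / v N"
  have c0: "c \<ge> 0" using u0 v0 by (simp add: c_def less_imp_le)
  have bnd: "u x \<le> c * v x" if "x \<ge> N" for x
    using that
  proof (induction x rule: dec_induct)
    case base then show ?case using v0[of N] by (simp add: c_def)
  next
    case (step x)
    have "u (Suc x) = u x * R x" by (rule uR)
    also have "\<dots> \<le> (c * v x) * R x" using step RS[of x] by (intro mult_right_mono) auto
    also have "\<dots> \<le> (c * v x) * S x" using RS[of x] step c0 v0[of x]
      by (intro mult_left_mono) auto
    also have "\<dots> = c * v (Suc x)" using vS[of x] by simp
    finally show ?case .
  qed
  show ?thesis
    by (rule summable_comparison_test'[where g="\<lambda>x. c * v x" and N=N])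
       (use sv bnd u0 in \<open>auto intro: summable_mult\<close>)
qed

lemma gamma_tele_summable:
  fixes s :: real assumes s: "s > 1"
  shows "summable (\<lambda>x. Gamma (real x + 1) / Gamma (real x + 1 + s))"
proof -
  define t where "t x = Gamma (real x + 1) / Gamma (real x + s)" for x :: nat
  have t0: "t x \<ge> 0" for x using s by (simp add: t_def less_imp_le)
  have eq: "t x - t (Suc x) = (s - 1) * (Gamma (real x + 1) / Gamma (real x + 1 + s))" for x
  proof -
    have g1: "Gamma (real x + 1 + 1) = (real x + 1) * Gamma (real x + 1)"
      by (rule Gamma_plus1) (auto simp: nonpos_Ints_def)
    have g2: "Gamma (real x + s + 1) = (real x + s) * Gamma (real x + s)"
      using s by (intro Gamma_plus1) (auto simp: nonpos_Ints_def)
    have p: "Gamma (real x + s) > 0" using s by simp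
    have e1: "real (Suc x) + 1 = real x + 1 + 1" and e2: "real (Suc x) + s = real x + s + 1"
      by simp_all
    have ts: "t (Suc x) = (real x + 1) * Gamma (real x + 1) / ((real x + s) * Gamma (real x + s))"
      unfolding t_def e1 e2 g1 g2 by simp
    have g3: "Gamma (real x + 1 + s) = (real x + s) * Gamma (real x + s)"
      using g2 by (simp add: add_ac)
    have xs: "real x + s > 0" using s by simp
    have nz': "Gamma (real x + s) \<noteq> 0" using p by linarith
    have nz: "Gamma (s + real x) \<noteq> 0" using p by (simp add: add_ac)
    have alg: "A / G - (x' + 1) * A / (y * G) = (s - 1) * (A / (y * G))"
      if "G \<noteq> 0" "y = x' + s" "y > 0" for A G y x' :: real
    proof -
      have "A / G = y * A / (y * G)" using that by simp
      then have "A / G - (x' + 1) * A / (y * G) = (y * A - (x' + 1) * A) / (y * G)"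
        by (simp add: diff_divide_distrib)
      also have "y * A - (x' + 1) * A = (s - 1) * A" using that by (simp add: algebra_simps)
      finally show ?thesis by simp
    qed
    show ?thesis unfolding ts g3 unfolding t_def
      by (rule alg) (use nz' xs in auto)
  qed
  have "summable (\<lambda>x. t x - t (Suc x))"
  proof (rule bounded_imp_summable[where B = "t 0"])
    show "0 \<le> t x - t (Suc x)" for x
      unfolding eq using s by (intro mult_nonneg_nonneg) (auto simp: less_imp_le)
    show "(\<Sum>k\<le>x. t k - t (Suc k)) \<le> t 0" for x
      using sum_lessThan_telescope'[of t "Suc x"] t0[of "Suc x"] by (simp add: lessThan_Suc_atMost)
  qed
  then have "summable (\<lambda>x. (1/(s-1)) * (t x - t (Suc x)))" by (rule summable_mult)
  then show ?thesis using s by (simp add: eq)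
qed

lemma poly_ineq:
  fixes p q t s d y :: real
  assumes y1: "y \<ge> 1" and d: "d > 0"
    and yb: "y \<ge> (abs (p*q+p*t+p* s+q*t+q* s+t* s) + abs (p*q*t+p*q* s+p*t* s+q*t* s) + abs (p*q*t* s)) / d"
  shows "(y+p)*(y+q)*(y+t)*(y+s) \<le> y^3*(y + (p+q+t+s) + d)"
proof -
  define e2 where "e2 = p*q+p*t+p* s+q*t+q* s+t* s"
  define e3 where "e3 = p*q*t+p*q* s+p*t* s+q*t* s"
  define e4 where "e4 = p*q*t* s"
  have id: "(y+p)*(y+q)*(y+t)*(y+s) = y^4 + (p+q+t+s)*y^3 + e2*y^2 + e3*y + e4"
    unfolding e2_def e3_def e4_def by algebra
  have r: "y^3*(y + (p+q+t+s) + d) = y^4 + (p+q+t+s)*y^3 + d*y^3" by algebra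
  have y0: "y \<ge> 0" using y1 by simp
  have a2: "e2*y^2 \<le> \<bar>e2\<bar>*y^2" by (intro mult_right_mono) auto
  have a3: "e3*y \<le> \<bar>e3\<bar>*y^2"
  proof -
    have "e3*y \<le> \<bar>e3\<bar>*y" using y0 by (intro mult_right_mono) auto
    also have "\<dots> \<le> \<bar>e3\<bar>*y^2" using y1 by (intro mult_left_mono) (auto simp: power2_eq_square)
    finally show ?thesis .
  qed
  have a4: "e4 \<le> \<bar>e4\<bar>*y^2"
  proof -
    have "1 \<le> y^2" using y1 by (simp add: one_le_power)
    then have "\<bar>e4\<bar> * 1 \<le> \<bar>e4\<bar> * y^2" by (intro mult_left_mono) auto
    then show ?thesis by linarith
  qed
  have yb': "(\<bar>e2\<bar>+\<bar>e3\<bar>+\<bar>e4\<bar>) / d \<le> y" using yb unfolding e2_def e3_def e4_def .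
  have "\<bar>e2\<bar>+\<bar>e3\<bar>+\<bar>e4\<bar> \<le> d*y" using yb' d by (simp add: divide_le_eq mult.commute)
  then have a5: "(\<bar>e2\<bar>+\<bar>e3\<bar>+\<bar>e4\<bar>)*y^2 \<le> (d*y)*y^2"
    by (intro mult_right_mono) auto
  have a6: "(\<bar>e2\<bar>+\<bar>e3\<bar>+\<bar>e4\<bar>)*y^2 = \<bar>e2\<bar>*y^2+\<bar>e3\<bar>*y^2+\<bar>e4\<bar>*y^2" by algebra
  have a7: "(d*y)*y^2 = d*y^3" by algebra
  show ?thesis unfolding id r using a2 a3 a4 a5 a6 a7 by linarith
qed
lemma Gamma_Suc_shift:
  fixes z :: real assumes "z + real x > 0"
  shows "Gamma (z + real (Suc x)) = (z + real x) * Gamma (z + real x)"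
proof -
  have "z + real (Suc x) = (z + real x) + 1" by simp
  then show ?thesis using assms by (simp only:) (rule Gamma_plus1, auto simp: nonpos_Ints_def)
qed

lemma Gamma_ne0: "(z::real) > 0 \<Longrightarrow> Gamma z \<noteq> 0"
  using Gamma_real_pos[of z] by linarith

lemma RS_aux:
  fixes X m a K c s :: real
  assumes X: "X \<ge> 0" and a: "a > 0" and K: "K > 0" and c: "c > 0" and s: "s > 1"
    and ineq: "(X + 1 + m) * (a + X) * (K + X) * (X + 1 + s) \<le> (X + 1)^3 * (c + X)"
  shows "(X + 1 + m) / (X + 1) * ((a + X) * (K + X) / ((c + X) * (X + 1))) \<le> (X + 1) / (X + 1 + s)"
proof -
  define N1 where "N1 = (X + 1 + m) * ((a + X) * (K + X))"
  define D1 where "D1 = (X + 1) * ((c + X) * (X + 1))"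
  have D1: "D1 > 0" unfolding D1_def using X c by (intro mult_pos_pos) auto
  have sp: "X + 1 + s > 0" using X s by simp
  have eq: "(X + 1 + m) / (X + 1) * ((a + X) * (K + X) / ((c + X) * (X + 1))) = N1 / D1"
    unfolding N1_def D1_def by (rule times_divide_times_eq)
  have e1: "N1 * (X + 1 + s) = (X + 1 + m) * (a + X) * (K + X) * (X + 1 + s)" unfolding N1_def by algebra
  have e2: "(X + 1) * D1 = (X + 1)^3 * (c + X)" unfolding D1_def by algebra
  have "N1 * (X + 1 + s) \<le> (X + 1) * D1" unfolding e1 e2 by (rule ineq)
  then have "N1 \<le> (X + 1) * D1 / (X + 1 + s)" using sp by (simp add: pos_le_divide_eq)
  then have "N1 \<le> (X + 1) / (X + 1 + s) * D1" by simp
  then have "N1 / D1 \<le> (X + 1) / (X + 1 + s)" using D1 by (simp add: pos_divide_le_eq)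
  then show ?thesis unfolding eq .
qed
lemma gwd_moment_summable:
  fixes a \<rho> K :: real and m :: nat
  assumes a: "a > 0" and r: "\<rho> > real m" and K0: "K \<ge> 0"
  shows "summable (\<lambda>x. real x ^ m * mgwd_prob a (\<lambda>i. K) \<rho> 1 (\<lambda>i. x))"
proof (cases "K = 0")
  case True
  have Z: "mgwd_prob a (\<lambda>i. K) \<rho> 1 (\<lambda>i. x) = 0" if "x \<ge> 1" for x
    using that True by (simp add: mgwd_prob_def gpoch_def)
  show ?thesis
  proof (rule summable_comparison_test'[where g="\<lambda>_. 0" and N=1])
    show "summable (\<lambda>_::nat. 0::real)" by (rule summable_zero)
    fix x :: nat assume "1 \<le> x"
    then show "norm (real x ^ m * mgwd_prob a (\<lambda>i. K) \<rho> 1 (\<lambda>i. x)) \<le> 0" using Z by simp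
  qed
next
  case False
  with K0 have K: "K > 0" by simp
  have rpos: "\<rho> > 0" using r by (meson of_nat_0_le_iff order_le_less_trans)
  define c where "c = \<rho> + a + K"
  have c: "c > 0" using rpos a K by (simp add: c_def)
  define s where "s = (\<rho> - m + 2) / 2"
  define d where "d = (\<rho> - m) / 2"
  have s1: "s > 1" and d0: "d > 0" using r by (simp_all add: s_def d_def)
  define C where "C = Gamma (\<rho>+K) / Gamma \<rho> * Gamma (\<rho>+a) / (Gamma a * Gamma K)"
  have C0: "C > 0" using rpos a K by (simp add: C_def)
  define q where "q x = Gamma (a + real x) * Gamma (K + real x) / (Gamma (c + real x) * Gamma (real x + 1))" for x :: nat
  define u where "u x = pochhammer (real x + 1) m * q x" for x
  define v where "v x = Gamma (real x + 1) / Gamma (real x + 1 + s)" for x :: nat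
  have gpos: "Gamma (z + real x) > 0" if "z > 0" for z x
    using that by (intro Gamma_real_pos) simp
  have q0: "q x > 0" for x
    unfolding q_def using gpos[OF a, of x] gpos[OF K, of x] gpos[OF c, of x] by simp
  have u0: "u x \<ge> 0" for x
    unfolding u_def using q0[of x] by (intro mult_nonneg_nonneg pochhammer_nonneg) (auto simp: less_imp_le)
  have v0: "v x > 0" for x unfolding v_def using s1 by simp
  have sv: "summable v" unfolding v_def by (rule gamma_tele_summable[OF s1])
  have p_eq: "mgwd_prob a (\<lambda>i. K) \<rho> 1 (\<lambda>i. x) = C * q x" for x
  proof -
    have f: "fact x = Gamma (real x + 1)" using Gamma_fact[of x, where 'a=real] by (simp add: add.commute)
    have e: "\<rho> + a + (K + real x) = c + real x" by (simp add: c_def)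
    have n1: "Gamma \<rho> \<noteq> 0" "Gamma a \<noteq> 0" "Gamma K \<noteq> 0" "Gamma (\<rho> + a) \<noteq> 0"
      "Gamma (c + real x) \<noteq> 0" "Gamma (real x + 1) \<noteq> 0"
    proof -
      have "0 < Gamma \<rho>" "0 < Gamma a" "0 < Gamma K" "0 < Gamma (\<rho> + a)"
        "0 < Gamma (c + real x)" "0 < Gamma (real x + 1)"
        using rpos a K gpos[OF c, of x] by (auto intro!: Gamma_real_pos simp del: Gamma_real_pos)
      then show "Gamma \<rho> \<noteq> 0" "Gamma a \<noteq> 0" "Gamma K \<noteq> 0" "Gamma (\<rho> + a) \<noteq> 0"
        "Gamma (c + real x) \<noteq> 0" "Gamma (real x + 1) \<noteq> 0" by linarith+
    qed
    have "mgwd_prob a (\<lambda>i. K) \<rho> 1 (\<lambda>i. x) =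
       Gamma (\<rho>+K) / Gamma \<rho> * (Gamma (a + real x) / Gamma a) / (Gamma (c + real x) / Gamma (\<rho> + a))
       * (Gamma (K + real x) / Gamma K / Gamma (real x + 1))"
      using rpos a K unfolding mgwd_prob_def gpoch_def f by (simp add: c_def ac_simps)
    also have "\<dots> = C * q x" unfolding C_def q_def using n1 by (simp add: field_simps)
    finally show ?thesis .
  qed
  define R where "R x = (real x + 1 + m) / (real x + 1) * ((a + real x) * (K + real x) / ((c + real x) * (real x + 1)))" for x :: nat
  define S where "S x = (real x + 1) / (real x + 1 + s)" for x :: nat
  have qS: "q (Suc x) = q x * ((a + real x) * (K + real x) / ((c + real x) * (real x + 1)))" for x
  proof -
    have g1: "Gamma (a + real (Suc x)) = (a + real x) * Gamma (a + real x)"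
      using a by (intro Gamma_Suc_shift) simp
    have g2: "Gamma (K + real (Suc x)) = (K + real x) * Gamma (K + real x)"
      using K by (intro Gamma_Suc_shift) simp
    have g3: "Gamma (c + real (Suc x)) = (c + real x) * Gamma (c + real x)"
      using c by (intro Gamma_Suc_shift) simp
    have g4: "Gamma (real (Suc x) + 1) = (real x + 1) * Gamma (real x + 1)"
      using Gamma_Suc_shift[of 1 x] by (simp add: add_ac)
    have n: "Gamma (c + real x) \<noteq> 0" "Gamma (real x + 1) \<noteq> 0" "c + real x \<noteq> 0"
      using Gamma_ne0[of "c + real x"] Gamma_ne0[of "real x + 1"] c by auto
    show ?thesis unfolding q_def g1 g2 g3 g4 using n by (simp add: field_simps)
  qed
  have uR: "u (Suc x) = u x * R x" for x
  proof -
    define z where "z = real x + 1"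
    have z: "z > 0" by (simp add: z_def)
    have "z * pochhammer (z + 1) m = (z + real m) * pochhammer z m"
      using pochhammer_rec[of z m] pochhammer_rec'[of z m] by simp
    then have P: "pochhammer (z + 1) m = (z + real m) / z * pochhammer z m"
      using z by (simp add: field_simps)
    have e: "real (Suc x) + 1 = z + 1" by (simp add: z_def)
    define Q where "Q = (a + real x) * (K + real x) / ((c + real x) * (real x + 1))"
    have "u (Suc x) = ((z + real m) / z * pochhammer z m) * (q x * Q)"
      unfolding u_def e P qS Q_def ..
    also have "\<dots> = (pochhammer z m * q x) * ((z + real m) / z * Q)" by (simp only: mult_ac)
    also have "\<dots> = u x * R x" unfolding u_def R_def Q_def z_def ..
    finally show ?thesis .
  qed
  have vS: "v (Suc x) = v x * S x" for x
  proof -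
    have g1: "Gamma (real (Suc x) + 1) = (real x + 1) * Gamma (real x + 1)"
      using Gamma_Suc_shift[of 1 x] by (simp add: add_ac)
    have g2: "Gamma (real (Suc x) + 1 + s) = (real x + 1 + s) * Gamma (real x + 1 + s)"
      using Gamma_Suc_shift[of "1 + s" x] s1 by (simp add: add_ac)
    have n: "Gamma (real x + 1 + s) \<noteq> 0" "real x + 1 + s \<noteq> 0" using s1 Gamma_ne0[of "real x + 1 + s"] by auto
    show ?thesis unfolding v_def S_def g1 g2 using n by (simp add: field_simps)
  qed
  define bnd where "bnd = (abs (m*(a-1)+m*(K-1)+m* s+(a-1)*(K-1)+(a-1)* s+(K-1)* s)
     + abs (m*(a-1)*(K-1)+m*(a-1)* s+m*(K-1)* s+(a-1)*(K-1)* s) + abs (m*(a-1)*(K-1)* s)) / d"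
  define N where "N = nat \<lceil>bnd\<rceil>"
  have RS: "0 \<le> R x \<and> R x \<le> S x" if "x \<ge> N" for x
  proof
    show "0 \<le> R x" unfolding R_def using a K c by (intro mult_nonneg_nonneg divide_nonneg_nonneg) auto
    define y where "y = real x + 1"
    have y1: "y \<ge> 1" by (simp add: y_def)
    have yb: "y \<ge> bnd" using that unfolding N_def y_def by linarith
    have P: "(y + m) * (y + (a-1)) * (y + (K-1)) * (y + s) \<le> y^3 * (y + (m + (a-1) + (K-1) + s) + d)"
      by (rule poly_ineq[OF y1 d0]) (use yb in \<open>simp add: bnd_def\<close>)
    have f1: "y + m = real x + 1 + m" and f2: "y + (a-1) = a + real x" and f3: "y + (K-1) = K + real x"
      and f4: "y + s = real x + 1 + s" by (simp_all add: y_def)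
    have f5: "y + (m + (a-1) + (K-1) + s) + d = c + real x"
      unfolding y_def c_def d_def s_def by (simp add: field_simps)
    have ineq: "(real x + 1 + m) * (a + real x) * (K + real x) * (real x + 1 + s)
         \<le> (real x + 1)^3 * (c + real x)"
      using P unfolding f1 f2 f3 f4 f5 by (simp only: y_def)
    show "R x \<le> S x" unfolding R_def S_def
      by (rule RS_aux[OF _ a K c s1 ineq]) simp
  qed
  have su: "summable u" by (rule ratio_comparison[OF u0 v0 sv uR vS RS])
  show ?thesis
  proof (rule summable_comparison_test'[where g="\<lambda>x. C * u x" and N=0])
    show "summable (\<lambda>x. C * u x)" using su by (rule summable_mult)
    fix x :: nat
    have pw: "real x ^ m \<le> pochhammer (real x + 1) m"
    proof -
      have "real x ^ m = (\<Prod>i\<in>{0..<m}. real x)" by simp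
      also have "\<dots> \<le> (\<Prod>i\<in>{0..<m}. real x + 1 + real i)" by (intro prod_mono) auto
      finally show ?thesis by (simp add: pochhammer_prod add.assoc)
    qed
    have "norm (real x ^ m * mgwd_prob a (\<lambda>i. K) \<rho> 1 (\<lambda>i. x)) = real x ^ m * (C * q x)"
      unfolding p_eq using C0 q0[of x] by simp
    also have "\<dots> \<le> pochhammer (real x + 1) m * (C * q x)"
      using pw C0 q0[of x] by (intro mult_right_mono) auto
    also have "\<dots> = C * u x" by (simp add: u_def)
    finally show "norm (real x ^ m * mgwd_prob a (\<lambda>i. K) \<rho> 1 (\<lambda>i. x)) \<le> C * u x" .
  qed
qed



lemma translate_eq_vimage:
  fixes u :: "'a::ab_group_add"
  shows "(\<lambda>x. x + u) ` S = (\<lambda>x. x - u) -` S"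
  by (auto simp: image_iff) (metis diff_add_cancel)

lemma lborel_measure_translate:
  fixes u :: "'a::euclidean_space"
  assumes S: "S \<in> sets borel"
  shows "measure lborel ((\<lambda>x. x - u) -` S) = measure lborel S"
proof -
  have "measure lborel S = measure (distr lborel borel ((+) (- u))) S"
    by (simp add: lborel_distr_plus)
  also have "\<dots> = measure lborel ((+) (- u) -` S \<inter> space lborel)"
    using S by (intro measure_distr) auto
  also have "(+) (- u) -` S \<inter> space lborel = (\<lambda>x. x - u) -` S" by auto
  finally show ?thesis by simp
qed

lemma borel_vimage_translate:
  fixes u :: "'a::euclidean_space"
  assumes S: "S \<in> sets borel"
  shows "(\<lambda>x. x - u) -` S \<in> sets borel"
proof -
  have "(\<lambda>x. x - u) \<in> borel_measurable borel" by simp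
  from measurable_sets[OF this S] show ?thesis by simp
qed

theorem theorem9:
  fixes M :: "'w measure" and N :: "'w \<Rightarrow> 'a::euclidean_space set \<Rightarrow> nat"
    and n :: nat and a \<rho> :: real and k :: nat
  assumes "n \<ge> 1" and "a > 0" and "\<rho> > real n" and "k > 0"
    and "gen_waring_process M N a \<rho> (real k) lborel"
  shows "\<forall>A::nat \<Rightarrow> 'a set. (\<forall>i<n. A i \<in> sets borel \<and> bounded (A i)) \<longrightarrow>
           integrable M (\<lambda>w. \<Prod>i<n. real (N w (A i))) \<and>
           (\<forall>u::'a. integral\<^sup>L M (\<lambda>w. \<Prod>i<n. real (N w ((\<lambda>x. x + u) ` A i)))
                   = integral\<^sup>L M (\<lambda>w. \<Prod>i<n. real (N w (A i))))"
proof -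
  note gw = assms(5)[unfolded gen_waring_process_def]
  interpret prob_space M using gw by blast
  have pp: "point_process M N" using gw by blast
  have F: "\<And>l (A::nat \<Rightarrow> 'a set) xs. (\<forall>i<l. A i \<in> sets borel \<and> bounded (A i)) \<Longrightarrow>
      disjoint_family_on A {..<l} \<Longrightarrow>
      measure M {w\<in>space M. \<forall>i<l. N w (A i) = xs i}
          = mgwd_prob a (\<lambda>i. real k * measure lborel (A i)) \<rho> l xs"
    using gw by blast
  have Nmeas: "(\<lambda>w. N w S) \<in> measurable M (count_space UNIV)" if "S \<in> sets borel" "bounded S" for S
    using pp that unfolding point_process_def by blast
  have Nnu: "\<exists>\<nu>. sets \<nu> = sets borel \<and> (\<forall>A\<in>sets borel. bounded A \<longrightarrow> emeasure \<nu> A = of_nat (N w A))"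
    if "w \<in> space M" for w
    using pp that unfolding point_process_def by blast
  have Nsum: "N w (\<Union>i\<in>I. S i) = (\<Sum>i\<in>I. N w (S i))"
    if w: "w \<in> space M" and I: "finite I" and dj: "disjoint_family_on S I"
      and SI: "\<And>i. i \<in> I \<Longrightarrow> S i \<in> sets borel \<and> bounded (S i)" for w I and S :: "'b \<Rightarrow> 'a set"
  proof -
    obtain \<nu> where \<nu>: "sets \<nu> = sets borel" "\<And>A. A\<in>sets borel \<Longrightarrow> bounded A \<Longrightarrow> emeasure \<nu> A = of_nat (N w A)"
      using Nnu[OF w] by blast
    have U: "(\<Union>i\<in>I. S i) \<in> sets borel" using I SI by (intro sets.finite_UN) auto
    have Ub: "bounded (\<Union>i\<in>I. S i)" using I SI by (intro bounded_UN) auto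
    have "(of_nat (N w (\<Union>i\<in>I. S i)) :: ennreal) = emeasure \<nu> (\<Union>i\<in>I. S i)" using \<nu> U Ub by simp
    also have "\<dots> = (\<Sum>i\<in>I. emeasure \<nu> (S i))"
      using I dj SI \<nu>(1) by (intro sum_emeasure[symmetric]) auto
    also have "\<dots> = (\<Sum>i\<in>I. of_nat (N w (S i)))" using SI \<nu> by (intro sum.cong) auto
    also have "\<dots> = of_nat (\<Sum>i\<in>I. N w (S i))" by simp
    finally show ?thesis by (simp only: of_nat_eq_iff)
  qed
  have Nmono: "N w S \<le> N w T"
    if w: "w \<in> space M" and "S \<subseteq> T" "S \<in> sets borel" "T \<in> sets borel" "bounded T" for w S T
  proof -
    have bS: "bounded S" using that bounded_subset by blast
    have "N w (\<Union>i\<in>{0::nat,1}. (if i = 0 then S else T - S)) = (\<Sum>i\<in>{0::nat,1}. N w (if i = 0 then S else T - S))"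
      using that bS by (intro Nsum) (auto simp: disjoint_family_on_def intro: bounded_diff)
    moreover have "(\<Union>i\<in>{0::nat,1}. (if i = 0 then S else T - S)) = T" using that by auto
    ultimately show ?thesis by simp
  qed
  define m where "m = card (Pow {..<n})"
  obtain h where h: "bij_betw h {0..<m} (Pow {..<n})"
    using ex_bij_betw_nat_finite[of "Pow {..<n}"] unfolding m_def by auto
  define atom where "atom A j = (\<Union>i<n. A i) \<inter> (\<Inter>i\<in>{..<n}. if i \<in> h j then A i else - A i)"
    for A :: "nat \<Rightarrow> 'a set" and j
  define good where "good A \<longleftrightarrow> (\<forall>i<n. A i \<in> sets borel \<and> bounded (A i))" for A :: "nat \<Rightarrow> 'a set"
  define Y where "Y A w = map (\<lambda>j. N w (atom A j)) [0..<m]" for A w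
  define g where "g ys = (\<Prod>i<n. real (\<Sum>j\<in>{j. j<m \<and> i \<in> h j}. ys ! j))" for ys :: "nat list"
  have n0: "{..<n} \<noteq> {}"
  proof -
    have "0 \<in> {..<n}" using assms(1) by simp
    then show ?thesis by blast
  qed
  have atom_mem: "x \<in> atom A j \<longleftrightarrow> (\<exists>i<n. x \<in> A i) \<and> (\<forall>i<n. x \<in> A i \<longleftrightarrow> i \<in> h j)" for A j x
    unfolding atom_def by auto
  have hsub: "h j \<subseteq> {..<n}" if "j < m" for j
    using h that unfolding bij_betw_def by auto
  have atom_good: "atom A j \<in> sets borel \<and> bounded (atom A j)" if "good A" for A j
  proof
    have U: "(\<Union>i<n. A i) \<in> sets borel" "bounded (\<Union>i<n. A i)"
      using that unfolding good_def by (auto intro!: sets.finite_UN bounded_UN)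
    have "(\<Inter>i\<in>{..<n}. if i \<in> h j then A i else - A i) \<in> sets borel"
      using that n0 unfolding good_def by (intro sets.finite_INT) auto
    then show "atom A j \<in> sets borel" unfolding atom_def using U by auto
    show "bounded (atom A j)" unfolding atom_def using U(2) by (rule bounded_subset) auto
  qed
  have atom_dj: "disjoint_family_on (atom A) {..<m}" for A
  proof (unfold disjoint_family_on_def, intro ballI impI)
    fix j j' assume j: "j \<in> {..<m}" and j': "j' \<in> {..<m}" and ne: "j \<noteq> j'"
    then have "h j \<noteq> h j'" using h unfolding bij_betw_def inj_on_def by auto
    then obtain i where "i \<in> h j \<longleftrightarrow> i \<notin> h j'" "i < n" using hsub j j' by auto
    then show "atom A j \<inter> atom A j' = {}" by (auto simp: atom_mem)
  qed
  have cover: "A i = (\<Union>j\<in>{j. j<m \<and> i \<in> h j}. atom A j)" if "i < n" for A i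
  proof
    show "(\<Union>j\<in>{j. j<m \<and> i \<in> h j}. atom A j) \<subseteq> A i" using that by (auto simp: atom_mem)
    show "A i \<subseteq> (\<Union>j\<in>{j. j<m \<and> i \<in> h j}. atom A j)"
    proof
      fix x assume x: "x \<in> A i"
      have "{i'. i' < n \<and> x \<in> A i'} \<in> h ` {0..<m}" using h unfolding bij_betw_def by auto
      then obtain j where j0: "j \<in> {0..<m}" "{i'. i' < n \<and> x \<in> A i'} = h j" by (rule imageE)
      then have j: "j < m" "h j = {i'. i' < n \<and> x \<in> A i'}" by auto
      then show "x \<in> (\<Union>j\<in>{j. j<m \<and> i \<in> h j}. atom A j)" using x that by (auto simp: atom_mem)
    qed
  qed
  have Nsplit: "N w (A i) = (\<Sum>j\<in>{j. j<m \<and> i \<in> h j}. N w (atom A j))"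
    if "good A" "w \<in> space M" "i < n" for A w i
  proof -
    have "N w (A i) = N w (\<Union>j\<in>{j. j<m \<and> i \<in> h j}. atom A j)" using cover[OF that(3)] by simp
    also have "\<dots> = (\<Sum>j\<in>{j. j<m \<and> i \<in> h j}. N w (atom A j))"
      using that atom_good atom_dj
      by (intro Nsum) (auto intro: disjoint_family_on_mono[of _ "{..<m}"])
    finally show ?thesis .
  qed
  have integrand: "(\<Prod>i<n. real (N w (A i))) = g (Y A w)" if "good A" "w \<in> space M" for A w
    unfolding g_def Y_def using Nsplit[OF that]
    by (intro prod.cong refl) (auto intro!: arg_cong[where f=real] sum.cong)
  have Ymeas: "Y A \<in> measurable M (count_space UNIV)" if "good A" for A
  proof (subst measurable_count_space_eq2_countable, intro conjI ballI)
    show "Y A \<in> space M \<rightarrow> UNIV" by simp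
    fix ys :: "nat list"
    have "Y A -` {ys} \<inter> space M = {w\<in>space M. length ys = m \<and> (\<forall>j<m. N w (atom A j) = ys ! j)}"
    proof -
      have mapeq: "map f [0..<m] = ys \<longleftrightarrow> (length ys = m \<and> (\<forall>j<m. f j = ys ! j))" for f :: "nat \<Rightarrow> nat"
        by (auto simp: list_eq_iff_nth_eq)
      show ?thesis unfolding Y_def vimage_def singleton_iff mapeq by blast
    qed
    also have "\<dots> \<in> sets M"
    proof -
      have "Measurable.pred M (\<lambda>w. N w (atom A j) = ys ! j)" if "j < m" for j
        using Nmeas[OF atom_good[OF \<open>good A\<close>, THEN conjunct1] atom_good[OF \<open>good A\<close>, THEN conjunct2]]
        by measurable
      then have "Measurable.pred M (\<lambda>w. \<forall>j\<in>{..<m}. N w (atom A j) = ys ! j)"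
        by (intro pred_intros_finite) auto
      then have "Measurable.pred M (\<lambda>w. \<forall>j<m. N w (atom A j) = ys ! j)"
        unfolding Ball_def lessThan_iff .
      then have P: "{w\<in>space M. \<forall>j<m. N w (atom A j) = ys ! j} \<in> sets M"
        unfolding pred_def .
      show ?thesis
      proof (cases "length ys = m")
        case True
        then have e: "{w\<in>space M. length ys = m \<and> (\<forall>j<m. N w (atom A j) = ys ! j)}
           = {w\<in>space M. \<forall>j<m. N w (atom A j) = ys ! j}" by blast
        show ?thesis unfolding e by (rule P)
      next
        case False
        then have e: "{w\<in>space M. length ys = m \<and> (\<forall>j<m. N w (atom A j) = ys ! j)} = {}" by blast
        show ?thesis unfolding e by (rule sets.empty_sets)
      qed
    qed
    finally show "Y A -` {ys} \<inter> space M \<in> sets M" .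
  qed
  have Yvim: "Y A -` {ys} \<inter> space M = {w\<in>space M. length ys = m \<and> (\<forall>j<m. N w (atom A j) = ys ! j)}"
    for A ys
  proof -
    have mapeq: "map f [0..<m] = ys \<longleftrightarrow> (length ys = m \<and> (\<forall>j<m. f j = ys ! j))" for f :: "nat \<Rightarrow> nat"
      by (auto simp: list_eq_iff_nth_eq)
    show ?thesis unfolding Y_def vimage_def singleton_iff mapeq by blast
  qed
  have Ydist: "emeasure (distr M (count_space UNIV) (Y A)) {ys} =
      (if length ys = m then ennreal (mgwd_prob a (\<lambda>j. real k * measure lborel (atom A j)) \<rho> m (\<lambda>j. ys ! j)) else 0)"
    if gA: "good A" for A ys
  proof -
    have "emeasure (distr M (count_space UNIV) (Y A)) {ys} = emeasure M (Y A -` {ys} \<inter> space M)"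
      using Ymeas[OF gA] by (intro emeasure_distr) auto
    also note Yvim
    finally have E: "emeasure (distr M (count_space UNIV) (Y A)) {ys} =
       emeasure M {w\<in>space M. length ys = m \<and> (\<forall>j<m. N w (atom A j) = ys ! j)}" .
    show ?thesis
    proof (cases "length ys = m")
      case True
      then have e: "{w\<in>space M. length ys = m \<and> (\<forall>j<m. N w (atom A j) = ys ! j)}
           = {w\<in>space M. \<forall>j<m. N w (atom A j) = ys ! j}" by blast
      have ev: "{w\<in>space M. \<forall>j<m. N w (atom A j) = ys ! j} \<in> sets M"
        using Ymeas[OF gA] Yvim[of A ys] True e
        by (metis (no_types, lifting) measurable_count_space_eq2_countable UNIV_I)
      have meq: "measure M {w\<in>space M. \<forall>j<m. N w (atom A j) = ys ! j}
          = mgwd_prob a (\<lambda>j. real k * measure lborel (atom A j)) \<rho> m (\<lambda>j. ys ! j)"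
        using F[of m "atom A" "\<lambda>j. ys ! j"] atom_good[OF gA] atom_dj[of A] by blast
      show ?thesis unfolding E e emeasure_eq_measure meq if_P[OF True] ..
    next
      case False
      then have e: "{w\<in>space M. length ys = m \<and> (\<forall>j<m. N w (atom A j) = ys ! j)} = {}" by blast
      show ?thesis unfolding E e if_not_P[OF False] by (rule emeasure_empty)
    qed
  qed
  have transl: "(\<lambda>x. x + u) ` S = (\<lambda>x. x - u) -` S" for u :: 'a and S by (rule translate_eq_vimage)
  have good_tr: "good (\<lambda>i. (\<lambda>x. x + u) ` A i)" if "good A" for A u
    unfolding good_def
  proof (intro allI impI conjI)
    fix i assume i: "i < n"
    show "(\<lambda>x. x + u) ` A i \<in> sets borel" unfolding transl
      using that i unfolding good_def by (intro borel_vimage_translate) auto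
    have e: "(\<lambda>x. x + u) = (\<lambda>x. u + x)" by (simp add: add.commute)
    have "bounded (A i)" using that i unfolding good_def by auto
    then show "bounded ((\<lambda>x. x + u) ` A i)"
      unfolding e by (rule bounded_translation)
  qed
  have atom_tr: "atom (\<lambda>i. (\<lambda>x. x + u) ` A i) j = (\<lambda>x. x - u) -` atom A j" for A u j
    by (rule set_eqI) (simp add: atom_mem transl)
  have dist_tr: "distr M (count_space UNIV) (Y (\<lambda>i. (\<lambda>x. x + u) ` A i)) = distr M (count_space UNIV) (Y A)"
    if gA: "good A" for A u
  proof (rule measure_eqI_countable[where A=UNIV])
    show "countable (UNIV :: nat list set)" by simp
    fix ys :: "nat list"
    have mm: "measure lborel (atom (\<lambda>i. (\<lambda>x. x + u) ` A i) j) = measure lborel (atom A j)" for j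
      unfolding atom_tr using atom_good[OF gA] by (intro lborel_measure_translate) auto
    show "emeasure (distr M (count_space UNIV) (Y (\<lambda>i. (\<lambda>x. x + u) ` A i))) {ys} =
          emeasure (distr M (count_space UNIV) (Y A)) {ys}"
      unfolding Ydist[OF gA] Ydist[OF good_tr[OF gA]] mm ..
  qed simp_all
  have int_tr: "integral\<^sup>L M (\<lambda>w. \<Prod>i<n. real (N w ((\<lambda>x. x + u) ` A i)))
                   = integral\<^sup>L M (\<lambda>w. \<Prod>i<n. real (N w (A i)))" if gA: "good A" for A u
  proof -
    have gA': "good (\<lambda>i. (\<lambda>x. x + u) ` A i)" by (rule good_tr[OF gA])
    have gm: "g \<in> borel_measurable (count_space UNIV)" by simp
    have "integral\<^sup>L M (\<lambda>w. \<Prod>i<n. real (N w ((\<lambda>x. x + u) ` A i))) = integral\<^sup>L M (\<lambda>w. g (Y (\<lambda>i. (\<lambda>x. x + u) ` A i) w))"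
      using integrand[OF gA'] by (intro Bochner_Integration.integral_cong) auto
    also have "\<dots> = integral\<^sup>L (distr M (count_space UNIV) (Y (\<lambda>i. (\<lambda>x. x + u) ` A i))) g"
      by (rule integral_distr[OF Ymeas[OF gA'] gm, symmetric])
    also have "\<dots> = integral\<^sup>L (distr M (count_space UNIV) (Y A)) g" unfolding dist_tr[OF gA] ..
    also have "\<dots> = integral\<^sup>L M (\<lambda>w. g (Y A w))"
      by (rule integral_distr[OF Ymeas[OF gA] gm])
    also have "\<dots> = integral\<^sup>L M (\<lambda>w. \<Prod>i<n. real (N w (A i)))"
      using integrand[OF gA] by (intro Bochner_Integration.integral_cong) auto
    finally show ?thesis .
  qed
  have integ: "integrable M (\<lambda>w. \<Prod>i<n. real (N w (A i)))" if gA: "good A" for A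
  proof -
    define B where "B = (\<Union>i<n. A i)"
    have B: "B \<in> sets borel" "bounded B"
      using gA unfolding good_def B_def by (auto intro!: sets.finite_UN bounded_UN)
    define K where "K = real k * measure lborel B"
    have K0: "K \<ge> 0" unfolding K_def by simp
    define p where "p x = mgwd_prob a (\<lambda>i. K) \<rho> 1 (\<lambda>i. x)" for x :: nat
    have Zm: "(\<lambda>w. N w B) \<in> measurable M (count_space UNIV)" by (rule Nmeas[OF B])
    have pM: "measure M {w\<in>space M. N w B = x} = p x" for x
    proof -
      have dj: "disjoint_family_on (\<lambda>_::nat. B) {..<1}" by (auto simp: disjoint_family_on_def)
      have "\<forall>i<1. (\<lambda>_::nat. B) i \<in> sets borel \<and> bounded ((\<lambda>_::nat. B) i)" using B by simp
      from F[OF this dj, of "\<lambda>_. x"]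
      have "measure M {w\<in>space M. N w B = x} = mgwd_prob a (\<lambda>i. real k * measure lborel B) \<rho> 1 (\<lambda>_. x)"
        by simp
      then show ?thesis unfolding p_def K_def .
    qed
    have p0: "p x \<ge> 0" for x using pM[of x] measure_nonneg by metis
    have Zev: "{w\<in>space M. N w B = x} \<in> sets M" for x
    proof -
      have "(\<lambda>w. N w B) -` {x} \<inter> space M \<in> sets M"
        using Zm by (subst (asm) measurable_count_space_eq2_countable) auto
      moreover have "(\<lambda>w. N w B) -` {x} \<inter> space M = {w\<in>space M. N w B = x}" by auto
      ultimately show ?thesis by simp
    qed
    have D: "distr M (count_space UNIV) (\<lambda>w. N w B) = density (count_space UNIV) (\<lambda>x. ennreal (p x))"
    proof (rule measure_eqI_countable[where A=UNIV])
      fix x :: nat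
      have "emeasure (distr M (count_space UNIV) (\<lambda>w. N w B)) {x} = emeasure M ((\<lambda>w. N w B) -` {x} \<inter> space M)"
        using Zm by (intro emeasure_distr) auto
      also have "(\<lambda>w. N w B) -` {x} \<inter> space M = {w\<in>space M. N w B = x}" by auto
      also have "emeasure M {w\<in>space M. N w B = x} = ennreal (p x)"
        unfolding emeasure_eq_measure pM ..
      also have "ennreal (p x) = emeasure (density (count_space UNIV) (\<lambda>x. ennreal (p x))) {x}"
        by (subst emeasure_density) auto
      finally show "emeasure (distr M (count_space UNIV) (\<lambda>w. N w B)) {x} =
         emeasure (density (count_space UNIV) (\<lambda>x. ennreal (p x))) {x}" .
    qed auto
    have sm: "summable (\<lambda>x. real x ^ n * p x)"
      unfolding p_def by (rule gwd_moment_summable[OF assms(2) assms(3) K0])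
    have Zint: "integrable M (\<lambda>w. real (N w B) ^ n)"
    proof (rule integrableI_bounded)
      have fm: "(\<lambda>x::nat. real x ^ n) \<in> borel_measurable (count_space UNIV)" by simp
      show "(\<lambda>w. real (N w B) ^ n) \<in> borel_measurable M"
        using measurable_compose[OF Zm fm] by simp
      have "(\<integral>\<^sup>+w. ennreal (norm (real (N w B) ^ n)) \<partial>M) = (\<integral>\<^sup>+w. ennreal (real (N w B) ^ n) \<partial>M)"
        by simp
      also have "\<dots> = (\<integral>\<^sup>+x. ennreal (real x ^ n) \<partial>distr M (count_space UNIV) (\<lambda>w. N w B))"
        using Zm by (intro nn_integral_distr[symmetric]) auto
      also have "\<dots> = (\<integral>\<^sup>+x. ennreal (p x) * ennreal (real x ^ n) \<partial>count_space UNIV)"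
        unfolding D by (subst nn_integral_density) auto
      also have "\<dots> = (\<Sum>x. ennreal (real x ^ n * p x))"
        unfolding nn_integral_count_space_nat using p0
        by (intro suminf_cong) (simp add: ennreal_mult'' mult.commute)
      also have "\<dots> = ennreal (\<Sum>x. real x ^ n * p x)"
        using sm p0 by (intro suminf_ennreal2) auto
      also have "\<dots> < \<infinity>" by simp
      finally show "(\<integral>\<^sup>+w. ennreal (norm (real (N w B) ^ n)) \<partial>M) < \<infinity>" .
    qed
    show ?thesis
    proof (rule Bochner_Integration.integrable_bound[OF Zint])
      have "(\<lambda>w. g (Y A w)) \<in> borel_measurable M"
        using measurable_compose[OF Ymeas[OF gA], of g borel] by simp
      then show "(\<lambda>w. \<Prod>i<n. real (N w (A i))) \<in> borel_measurable M"
        using integrand[OF gA] by (subst measurable_cong) auto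
      show "AE w in M. norm (\<Prod>i<n. real (N w (A i))) \<le> norm (real (N w B) ^ n)"
      proof (rule AE_I2)
        fix w assume w: "w \<in> space M"
        have "(\<Prod>i<n. real (N w (A i))) \<le> (\<Prod>i<n. real (N w B))"
        proof (intro prod_mono conjI)
          fix i assume "i \<in> {..<n}"
          then have "A i \<subseteq> B" "A i \<in> sets borel" using gA unfolding B_def good_def by auto
          then show "real (N w (A i)) \<le> real (N w B)" using Nmono[OF w _ _ B(1) B(2)] by simp
        qed simp
        then show "norm (\<Prod>i<n. real (N w (A i))) \<le> norm (real (N w B) ^ n)"
          by (simp add: prod_nonneg abs_prod)
      qed
    qed
  qed
  show ?thesis
  proof (intro allI impI conjI)
    fix A :: "nat \<Rightarrow> 'a set" and u :: 'a
    assume "\<forall>i<n. A i \<in> sets borel \<and> bounded (A i)"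
    then have gA: "good A" unfolding good_def .
    show "integrable M (\<lambda>w. \<Prod>i<n. real (N w (A i)))" by (rule integ[OF gA])
    show "integral\<^sup>L M (\<lambda>w. \<Prod>i<n. real (N w ((\<lambda>x. x + u) ` A i)))
                   = integral\<^sup>L M (\<lambda>w. \<Prod>i<n. real (N w (A i)))" by (rule int_tr[OF gA])
  qed
qed

end
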